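(* Let $\sigma\in\{+1,-1\}$, $k\ge1$, and let $a_0,a_1,\dots,a_k\in\mathbb Z^m$ be such that $a_0\notin\{0,a_1,\dots,a_k\}$ and $a_1,\dots,a_k$ are linearly independent. Suppose $n_0,n_1,\dots,n_k\in\mathbb Z$ with $n_0\ne0$ satisfy $\sum_{i=0}^kn_ia_i=0$. Then $$\sum_{i=0}^kn_i\,C(a_i,\sigma)\ne0\quad\text{in }\mathbb Z[e_1,\dots,e_m].$$ Equivalently: in a possible combinatorial graph whose vertices of a given color, other than the root $(0,+)$, span a lattice of rank $k$, either there are exactly $k$ such vertices or the graph produces an avoidable resonance.
   Context: Identify $a=\sum_ia_ie_i\in\mathbb Z^m$ with a linear form in the polynomial ring $\mathbb Z[e_1,\dots,e_m]$; $a^2$ is its square in this ring and $a^{(2)}:=\sum_ia_ie_i^2$. For $\sigma=\pm1$ set $C(a,\sigma)=\frac{\sigma}{2}(a^2+a^{(2)})$. (A vertex $(a,\sigma)$ of a graph in $\mathbb Z^m\times\{\pm\}$ has color black if $\sigma=+$, red if $\sigma=-$; a relation $\sum n_aa=0$ among vertices produces an avoidable resonance if $\sum n_aC(a,\sigma_a)\ne0$.) *)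

theory Defs
  imports Complex_Main "HOL-Library.Poly_Mapping"
begin

text \<open>Polynomials in the variables e_i (i ranging over the finite index type 'm,
  so m = CARD('m)) are modelled as finitely supported maps from monomials
  ('m =>0 nat) to coefficients. We take rational coefficients so that the
  factor 1/2 in C can be written literally; Z[e] embeds into Q[e].\<close>

type_synonym 'm mpoly = "('m \<Rightarrow>\<^sub>0 nat) \<Rightarrow>\<^sub>0 rat"

definition var :: "'m \<Rightarrow> 'm mpoly" where
  "var i = Poly_Mapping.single (Poly_Mapping.single i 1) 1"

definition const :: "rat \<Rightarrow> 'm mpoly" where
  "const c = Poly_Mapping.single 0 c"

definition linform :: "('m::finite \<Rightarrow> int) \<Rightarrow> 'm mpoly" where
  "linform a = (\<Sum>i\<in>UNIV. const (of_int (a i)) * var i)"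

definition sqform :: "('m::finite \<Rightarrow> int) \<Rightarrow> 'm mpoly" where
  "sqform a = (\<Sum>i\<in>UNIV. const (of_int (a i)) * (var i * var i))"

definition C :: "('m::finite \<Rightarrow> int) \<Rightarrow> int \<Rightarrow> 'm mpoly" where
  "C a \<sigma> = const (of_int \<sigma> / 2) * (linform a * linform a + sqform a)"

definition lin_indep_vecs :: "nat \<Rightarrow> (nat \<Rightarrow> 'm \<Rightarrow> int) \<Rightarrow> bool" where
  "lin_indep_vecs k a \<longleftrightarrow>
     (\<forall>c :: nat \<Rightarrow> int. (\<forall>j. (\<Sum>i\<in>{1..k}. c i * a i j) = 0) \<longrightarrow> (\<forall>i\<in>{1..k}. c i = 0))"

end

theory Submission imports Defs begin

lemma lookup_const_mult: "Poly_Mapping.lookup (const c * p) m = c * Poly_Mapping.lookup p m"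
  unfolding const_def mult_map_scale_conv_mult[symmetric]
  by transfer (simp add: when_def)

lemma linform_eq: "linform a = (\<Sum>i\<in>UNIV. Poly_Mapping.single (Poly_Mapping.single i (1::nat)) (of_int (a i) :: rat))"
  unfolding linform_def const_def var_def by (simp add: mult_single del: single_of_int)

lemma sqform_eq: "sqform a = (\<Sum>i\<in>UNIV. Poly_Mapping.single (Poly_Mapping.single i (1::nat) + Poly_Mapping.single i 1) (of_int (a i) :: rat))"
  unfolding sqform_def const_def var_def by (simp add: mult_single del: single_of_int)

lemma lin_sq: "linform a * linform a = (\<Sum>i\<in>UNIV. \<Sum>j\<in>UNIV. Poly_Mapping.single (Poly_Mapping.single i (1::nat) + Poly_Mapping.single j 1) (of_int (a i * a j) :: rat))"
  unfolding linform_eq sum_product by (simp add: mult_single)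

lemma lookupC: "Poly_Mapping.lookup (C a \<sigma>) m = (of_int \<sigma> / 2 :: rat) * ((\<Sum>i\<in>UNIV. \<Sum>j\<in>UNIV. (of_int (a i * a j) when Poly_Mapping.single i (1::nat) + Poly_Mapping.single j 1 = m)) + (\<Sum>i\<in>UNIV. (of_int (a i) when Poly_Mapping.single i (1::nat) + Poly_Mapping.single i 1 = m)))"
  unfolding C_def lookup_const_mult lin_sq sqform_eq lookup_add lookup_sum lookup_single
  by simp

lemma mono_eq: "(Poly_Mapping.single i (1::nat) + Poly_Mapping.single j 1 = Poly_Mapping.single p 1 + Poly_Mapping.single q 1)
   \<longleftrightarrow> (i = p \<and> j = q) \<or> (i = q \<and> j = p)"
proof
  assume h: "Poly_Mapping.single i (1::nat) + Poly_Mapping.single j 1 = Poly_Mapping.single p 1 + Poly_Mapping.single q 1"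
  have e: "(if i = x then 1 else 0) + (if j = x then 1 else 0) = (if p = x then 1 else 0) + ((if q = x then 1 else 0)::nat)" for x
  proof -
    have "Poly_Mapping.lookup (Poly_Mapping.single i (1::nat) + Poly_Mapping.single j 1) x = Poly_Mapping.lookup (Poly_Mapping.single p 1 + Poly_Mapping.single q 1) x"
      using h by simp
    thus ?thesis by (simp only: lookup_add lookup_single when_def)
  qed
  show "(i = p \<and> j = q) \<or> (i = q \<and> j = p)"
  proof (cases "i = j")
    case True
    have "p = i \<and> q = i" using e[of i] True by (auto split: if_splits)
    thus ?thesis using True by simp
  next
    case False
    have 1: "(p = i \<and> q \<noteq> i) \<or> (p \<noteq> i \<and> q = i)" using e[of i] False by (auto split: if_splits)
    have 2: "(p = j \<and> q \<noteq> j) \<or> (p \<noteq> j \<and> q = j)" using e[of j] False by (auto split: if_splits)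
    show ?thesis using 1 2 False by blast
  qed
qed (auto simp: add.commute)

lemma dsum: "(\<Sum>i\<in>(UNIV::'m::finite set). \<Sum>j\<in>UNIV. ((f i j)::rat) when (i = p \<and> j = q) \<or> (i = q \<and> j = p)) = (if p = q then f p p else f p q + f q p)"
proof (cases "p = q")
  case True
  have eq: "(\<Sum>j\<in>UNIV. ((f i j)::rat) when (i = p \<and> j = q) \<or> (i = q \<and> j = p)) = (if i = p then f p p else 0)" for i
    using True by (cases "i = p") (simp_all add: when_def)
  show ?thesis unfolding eq using True by simp
next
  case False
  have eq: "(\<Sum>j\<in>UNIV. ((f i j)::rat) when (i = p \<and> j = q) \<or> (i = q \<and> j = p)) = (if i = p then f p q else 0) + (if i = q then f q p else 0)" for i
    using False by (cases "i = p"; cases "i = q") (simp_all add: when_def)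
  show ?thesis unfolding eq sum.distrib using False by simp
qed

lemma lookupC2: "Poly_Mapping.lookup (C a \<sigma>) (Poly_Mapping.single p (1::nat) + Poly_Mapping.single q 1)
  = (of_int \<sigma> / 2 :: rat) * (if p = q then of_int (a p * a p + a p) else 2 * of_int (a p * a q))"
proof -
  have s: "(\<Sum>i\<in>UNIV. (of_int (a i) when Poly_Mapping.single i (1::nat) + Poly_Mapping.single i 1 = Poly_Mapping.single p (1::nat) + Poly_Mapping.single q 1)) = (if p = q then of_int (a p) else (0::rat))"
  proof (cases "p = q")
    case False
    hence z: "\<And>i. (of_int (a i) when (i=p\<and>i=q) \<or> (i=q\<and>i=p)) = (0::rat)" by (auto simp: when_def)
    show ?thesis unfolding mono_eq z using False by simp
  next
    case True
    hence z: "\<And>i. (of_int (a i) when (i=p\<and>i=q) \<or> (i=q\<and>i=p)) = (if i = p then of_int (a p) else (0::rat))" by (auto simp: when_def)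
    show ?thesis unfolding mono_eq z using True by simp
  qed
  show ?thesis unfolding lookupC s unfolding mono_eq dsum by (auto simp: algebra_simps)
qed

theorem mainTheorem9:
  fixes a :: "nat \<Rightarrow> ('m::finite \<Rightarrow> int)" and n :: "nat \<Rightarrow> int"
    and \<sigma> :: int and k :: nat
  assumes "\<sigma> = 1 \<or> \<sigma> = -1"
    and "k \<ge> 1"
    and "a 0 \<noteq> (\<lambda>_. 0)"
    and "\<forall>i\<in>{1..k}. a 0 \<noteq> a i"
    and "lin_indep_vecs k a"
    and "n 0 \<noteq> 0"
    and "\<forall>j. (\<Sum>i\<in>{0..k}. n i * a i j) = 0"
  shows "(\<Sum>i\<in>{0..k}. const (of_int (n i)) * C (a i) \<sigma>) \<noteq> 0"
proof
  assume P: "(\<Sum>i\<in>{0..k}. const (of_int (n i)) * C (a i) \<sigma>) = 0"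
  have sig: "\<sigma> \<noteq> 0" using assms(1) by auto
  have lin: "(\<Sum>i\<in>{0..k}. n i * a i j) = 0" for j using assms(7) by auto
  have Q: "(\<Sum>i\<in>{0..k}. n i * a i p * a i q) = 0" for p q
  proof -
    have "Poly_Mapping.lookup (\<Sum>i\<in>{0..k}. const (of_int (n i)) * C (a i) \<sigma>) (Poly_Mapping.single p (1::nat) + Poly_Mapping.single q 1) = 0"
      using P by simp
    hence L: "(\<Sum>i\<in>{0..k}. of_int (n i) * ((of_int \<sigma> / 2 :: rat) * (if p = q then of_int (a i p * a i p + a i p) else 2 * of_int (a i p * a i q)))) = 0"
      unfolding lookup_sum lookup_const_mult lookupC2 .
    show ?thesis
    proof (cases "p = q")
      case True
      have pw: "\<And>i. of_int (n i) * ((of_int \<sigma> / 2 :: rat) * (if p = q then of_int (a i p * a i p + a i p) else 2 * of_int (a i p * a i q)))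
         = (of_int \<sigma> / 2) * (of_int (n i * a i p * a i q) + of_int (n i * a i p))"
        using True by (simp add: algebra_simps)
      have "(\<Sum>i\<in>{0..k}. of_int (n i) * ((of_int \<sigma> / 2 :: rat) * (if p = q then of_int (a i p * a i p + a i p) else 2 * of_int (a i p * a i q))))
        = (of_int \<sigma> / 2) * (of_int (\<Sum>i\<in>{0..k}. n i * a i p * a i q) + of_int (\<Sum>i\<in>{0..k}. n i * a i p))"
        unfolding pw sum_distrib_left[symmetric] sum.distrib of_int_sum ..
      hence "(of_int \<sigma> / 2 :: rat) * of_int (\<Sum>i\<in>{0..k}. n i * a i p * a i q) = 0"
        using L lin[of p] by simp
      hence "of_int (\<sigma> * (\<Sum>i\<in>{0..k}. n i * a i p * a i q)) = (0::rat)" by (simp del: of_int_sum)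
      thus ?thesis using sig by (simp del: of_int_mult of_int_sum)
    next
      case False
      have "(\<Sum>i\<in>{0..k}. of_int (n i) * ((of_int \<sigma> / 2 :: rat) * (if p = q then of_int (a i p * a i p + a i p) else 2 * of_int (a i p * a i q))))
        = (of_int \<sigma>) * (of_int (\<Sum>i\<in>{0..k}. n i * a i p * a i q))"
      proof -
        have pw: "\<And>i. of_int (n i) * ((of_int \<sigma> / 2 :: rat) * (if p = q then of_int (a i p * a i p + a i p) else 2 * of_int (a i p * a i q)))
           = of_int \<sigma> * of_int (n i * a i p * a i q)"
          using False by (simp add: algebra_simps)
        show ?thesis unfolding pw sum_distrib_left[symmetric] of_int_sum ..
      qed
      hence "(of_int \<sigma> :: rat) * of_int (\<Sum>i\<in>{0..k}. n i * a i p * a i q) = 0" using L by linarith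
      hence "of_int (\<sigma> * (\<Sum>i\<in>{0..k}. n i * a i p * a i q)) = (0::rat)" by (metis of_int_mult)
      thus ?thesis using sig by (simp del: of_int_mult of_int_sum)
    qed
  qed
  have split: "(\<Sum>i\<in>{0..k}. f i) = f 0 + (\<Sum>i\<in>{1..k}. f i)" for f :: "nat \<Rightarrow> int"
    by (simp add: sum.atLeast_Suc_atMost)
  have c0: "\<forall>i\<in>{1..k}. n 0 * n i * (a i j - a 0 j) = 0" for j
  proof -
    have "\<forall>l. (\<Sum>i\<in>{1..k}. (n 0 * n i * (a i j - a 0 j)) * a i l) = 0"
    proof
      fix l
      have q: "n 0 * a 0 j * a 0 l + (\<Sum>i\<in>{1..k}. n i * a i j * a i l) = 0"
        using Q[of j l] split by simp
      have r: "n 0 * a 0 l + (\<Sum>i\<in>{1..k}. n i * a i l) = 0"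
        using lin[of l] split by simp
      have "(\<Sum>i\<in>{1..k}. (n 0 * n i * (a i j - a 0 j)) * a i l)
          = n 0 * (\<Sum>i\<in>{1..k}. n i * a i j * a i l) - n 0 * a 0 j * (\<Sum>i\<in>{1..k}. n i * a i l)"
      proof -
        have pw: "\<And>i. (n 0 * n i * (a i j - a 0 j)) * a i l = n 0 * (n i * a i j * a i l) - n 0 * a 0 j * (n i * a i l)"
          by (simp add: algebra_simps)
        show ?thesis unfolding pw sum_subtractf sum_distrib_left[symmetric] ..
      qed
      also have "\<dots> = n 0 * (- (n 0 * a 0 j * a 0 l)) - n 0 * a 0 j * (- (n 0 * a 0 l))"
      proof -
        have S1: "(\<Sum>i\<in>{1..k}. n i * a i j * a i l) = - (n 0 * a 0 j * a 0 l)" using q by linarith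
        have S2: "(\<Sum>i\<in>{1..k}. n i * a i l) = - (n 0 * a 0 l)" using r by linarith
        show ?thesis by (simp only: S1 S2)
      qed
      also have "\<dots> = 0" by (simp add: algebra_simps)
      finally show "(\<Sum>i\<in>{1..k}. (n 0 * n i * (a i j - a 0 j)) * a i l) = 0" .
    qed
    moreover have li: "\<And>c. (\<forall>j. (\<Sum>i\<in>{1..k}. c i * a i j) = 0) \<Longrightarrow> \<forall>i\<in>{1..k}. c i = 0"
      using assms(5) unfolding lin_indep_vecs_def by blast
    ultimately show ?thesis using li[of "\<lambda>i. n 0 * n i * (a i j - a 0 j)"] by simp
  qed
  have nz: "n i = 0" if i: "i \<in> {1..k}" for i
  proof (rule ccontr)
    assume "n i \<noteq> 0"
    hence "a i j = a 0 j" for j using c0[of j] i assms(6) by auto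
    hence "a 0 = a i" by auto
    thus False using assms(4) i by auto
  qed
  have "n 0 * a 0 j = 0" for j using lin[of j] split nz by simp
  hence "a 0 = (\<lambda>_. 0)" using assms(6) by auto
  thus False using assms(3) by simp
qed

end
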